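(* Fix $a>0$. Let $f\in C^\infty(\mathbb{T})$ be even and nonnegative with $f(0)=0$ and $f'\ge 0$ on $[0,\pi)$. Then for all $0<x\le \pi/2$, \[ H_a f(x) \le \int_0^{2x} f'(y)\,G_a(x,y)\,dy, \] where \[ G_a(x,y) := \frac{1}{2\pi}\log\left(\frac{1+\frac{a^2}{x^2}}{1+\frac{a^2}{(x-y)^2}}\cdot\frac{1+\frac{a^2}{(2\pi-x)^2}}{1+\frac{a^2}{(x-y+2\pi\,\mathrm{sgn}(y-x))^2}}\right). \]
   Context: $\mathbb{T}=[-\pi,\pi)$ is the circle; functions on $\mathbb{T}$ are identified with $2\pi$-periodic functions on $\mathbb{R}$, and $C^\infty(\mathbb{T})$ denotes smooth $2\pi$-periodic functions with all derivatives bounded. For $a>0$, $H_a f(x) := \mathrm{P.V.}\int_{\mathbb{R}} f(x-y)K_a(y)\,dy$ with $K_a(y) := \frac{a^2}{\pi y(y^2+a^2)}$, applied to the periodic extension of $f$. *)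

theory Defs
  imports "HOL-Analysis.Analysis"
begin

definition smooth_fun :: "(real \<Rightarrow> real) \<Rightarrow> bool" where
  "smooth_fun f \<longleftrightarrow> (\<forall>n x. ((deriv ^^ n) f) differentiable (at x))"

definition smooth_periodic :: "(real \<Rightarrow> real) \<Rightarrow> bool" where
  "smooth_periodic f \<longleftrightarrow> smooth_fun f \<and> (\<forall>x. f (x + 2 * pi) = f x)
     \<and> (\<forall>n. bounded (range ((deriv ^^ n) f)))"

definition K :: "real \<Rightarrow> real \<Rightarrow> real" where
  "K a y = a\<^sup>2 / (pi * y * (y\<^sup>2 + a\<^sup>2))"

definition PV_integral :: "(real \<Rightarrow> real) \<Rightarrow> real" where
  "PV_integral g = Lim (at_right 0) (\<lambda>\<epsilon>. integral {y. \<epsilon> \<le> \<bar>y\<bar>} g)"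

definition H :: "real \<Rightarrow> (real \<Rightarrow> real) \<Rightarrow> real \<Rightarrow> real" where
  "H a f x = PV_integral (\<lambda>y. f (x - y) * K a y)"

definition G :: "real \<Rightarrow> real \<Rightarrow> real \<Rightarrow> real" where
  "G a x y = (1 / (2 * pi)) * ln (
      ((1 + a\<^sup>2 / x\<^sup>2) / (1 + a\<^sup>2 / (x - y)\<^sup>2)) *
      ((1 + a\<^sup>2 / (2 * pi - x)\<^sup>2) / (1 + a\<^sup>2 / (x - y + 2 * pi * sgn (y - x))\<^sup>2)))"

end

theory Submission
  imports Defs "HOL-Real_Asymp.Real_Asymp"
begin


definition phi :: "real \<Rightarrow> real \<Rightarrow> real" where
  "phi a u = ln (1 + a\<^sup>2 / u\<^sup>2)"

definition psi :: "real \<Rightarrow> real \<Rightarrow> real" where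
  "psi a u = phi a u + phi a (2 * pi - u)"

definition Q :: "real \<Rightarrow> real \<Rightarrow> real" where
  "Q a u = K a u - K a (2 * pi - u)"

lemma K_pos: "a > 0 \<Longrightarrow> y > 0 \<Longrightarrow> K a y > 0"
  unfolding K_def by (simp add: add_pos_pos)

lemma K_odd: "K a (- y) = - K a y"
  unfolding K_def by simp

lemma K_anti: assumes "a > 0" "0 < y" "y \<le> z" shows "K a z \<le> K a y"
proof -
  have "pi * y * (y\<^sup>2 + a\<^sup>2) \<le> pi * z * (z\<^sup>2 + a\<^sup>2)"
    using assms by (intro mult_mono power_mono add_mono) auto
  moreover have "0 < pi * y * (y\<^sup>2 + a\<^sup>2)" using assms by (simp add: add_pos_pos)
  moreover have "0 < pi * z * (z\<^sup>2 + a\<^sup>2)" using assms by (simp add: add_pos_pos)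
  ultimately show ?thesis unfolding K_def
    by (intro divide_left_mono) (auto simp: add_pos_pos)
qed

lemma K_le: assumes "a > 0" "y > 0" shows "K a y \<le> 1 / (pi * y)"
proof -
  have "K a y = (a\<^sup>2 / (y\<^sup>2 + a\<^sup>2)) * (1 / (pi * y))" unfolding K_def by (simp add: field_simps)
  also have "\<dots> \<le> 1 * (1 / (pi * y))"
    using assms by (intro mult_right_mono) (auto simp: add_pos_pos)
  finally show ?thesis by simp
qed

lemma yK_eq: assumes "y \<noteq> 0" shows "y * K a y = a\<^sup>2 / (pi * (y\<^sup>2 + a\<^sup>2))"
proof -
  have "y\<^sup>2 + a\<^sup>2 > 0" using assms by (simp add: add_pos_nonneg)
  then have "pi * y * (y\<^sup>2 + a\<^sup>2) = y * (pi * (y\<^sup>2 + a\<^sup>2))" by (simp add: ac_simps)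
  then show ?thesis using assms unfolding K_def by simp
qed

lemma Q_nonneg: assumes "a > 0" "0 < u" "u \<le> pi" shows "Q a u \<ge> 0"
  using K_anti[of a u "2*pi - u"] assms unfolding Q_def by auto

lemma phi_deriv: assumes "a > 0" "u \<noteq> 0"
  shows "(phi a has_real_derivative (- 2 * pi * K a u)) (at u)"
proof -
  have pos: "1 + a\<^sup>2 / u\<^sup>2 > 0" by (simp add: add_pos_nonneg)
  have "((\<lambda>u. ln (1 + a\<^sup>2 / u\<^sup>2)) has_real_derivative
      ((- (a\<^sup>2 * (2 * u)) / (u\<^sup>2)\<^sup>2) / (1 + a\<^sup>2 / u\<^sup>2))) (at u)"
    using assms pos by (auto intro!: derivative_eq_intros)
  moreover have "u\<^sup>2 + a\<^sup>2 > 0" using assms by (simp add: add_pos_nonneg)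
  then have "u * (u\<^sup>2 + a\<^sup>2) \<noteq> 0" using assms by simp
  then have "a * (a * u) + u * (u * u) \<noteq> 0" 
    by (simp add: algebra_simps power2_eq_square)
  moreover have "(- (a\<^sup>2 * (2 * u)) / (u\<^sup>2)\<^sup>2) / (1 + a\<^sup>2 / u\<^sup>2) = - 2 * pi * K a u"
  proof -
    have u2: "u\<^sup>2 \<noteq> 0" "u\<^sup>2 + a\<^sup>2 \<noteq> 0" using assms \<open>u\<^sup>2 + a\<^sup>2 > 0\<close> by auto
    have "1 + a\<^sup>2 / u\<^sup>2 = (u\<^sup>2 + a\<^sup>2) / u\<^sup>2" using u2 by (simp add: field_simps)
    then have "(- (a\<^sup>2 * (2 * u)) / (u\<^sup>2)\<^sup>2) / (1 + a\<^sup>2 / u\<^sup>2) = - (a\<^sup>2 * (2 * u)) / (u\<^sup>2 * (u\<^sup>2 + a\<^sup>2))"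
      using u2 by (simp add: power2_eq_square)
    also have "\<dots> = - 2 * a\<^sup>2 / (u * (u\<^sup>2 + a\<^sup>2))"
      using assms by (simp add: power2_eq_square)
    also have "\<dots> = - 2 * pi * K a u" unfolding K_def by simp
    finally show ?thesis .
  qed
  ultimately show ?thesis unfolding phi_def[abs_def] by simp
qed

lemma psi_deriv: assumes "a > 0" "u \<noteq> 0" "u \<noteq> 2 * pi"
  shows "(psi a has_real_derivative (- 2 * pi * Q a u)) (at u)"
proof -
  have d1: "(phi a has_real_derivative (- 2 * pi * K a u)) (at u)"
    using assms phi_deriv by auto
  have d2: "((\<lambda>u. phi a (2 * pi - u)) has_real_derivative (- 2 * pi * K a (2 * pi - u)) * (0 - 1)) (at u)"
    using assms by (intro DERIV_chain2[of "phi a"] phi_deriv derivative_eq_intros) auto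
  have "((\<lambda>u. phi a u + phi a (2 * pi - u)) has_real_derivative
      (- 2 * pi * K a u + (- 2 * pi * K a (2 * pi - u)) * (0 - 1))) (at u)"
    by (rule DERIV_add[OF d1 d2])
  then show ?thesis unfolding psi_def[abs_def] Q_def by (simp add: algebra_simps)
qed

lemma psi_anti: assumes "a > 0" "0 < u" "u \<le> v" "v \<le> pi" shows "psi a v \<le> psi a u"
proof (rule DERIV_nonpos_imp_nonincreasing[OF assms(3)])
  fix t assume "u \<le> t" "t \<le> v"
  then show "\<exists>y. DERIV (psi a) t :> y \<and> y \<le> 0"
    using assms Q_nonneg[of a t] by (intro exI[of _ "- 2 * pi * Q a t"] conjI psi_deriv) auto
qed

lemma phi_nonneg: "phi a u \<ge> 0"
  unfolding phi_def by (simp add: add_nonneg_nonneg)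

lemma phi_le: "phi a u \<le> a\<^sup>2 / u\<^sup>2"
  unfolding phi_def by (rule ln_add_one_self_le_self) simp

lemma G_left: assumes "0 \<le> y" "y < x" "x < 2 * pi"
  shows "G a x y = (psi a x - psi a (x - y)) / (2 * pi)"
proof -
  have s: "sgn (y - x) = -1" using assms by simp
  have e: "(x - y + 2 * pi * -1)\<^sup>2 = (2 * pi - (x - y))\<^sup>2" by (simp add: power2_eq_square algebra_simps)
  have e2: "(2 * pi - x)\<^sup>2 = (2 * pi - x)\<^sup>2" ..
  define A where "A = 1 + a\<^sup>2 / x\<^sup>2"
  define B where "B = 1 + a\<^sup>2 / (x - y)\<^sup>2"
  define C where "C = 1 + a\<^sup>2 / (2 * pi - x)\<^sup>2"
  define D where "D = 1 + a\<^sup>2 / (2 * pi - (x - y))\<^sup>2"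
  have p: "A > 0" "B > 0" "C > 0" "D > 0" unfolding A_def B_def C_def D_def
    by (simp_all add: add_pos_nonneg)
  have "G a x y = (1 / (2 * pi)) * ln ((A / B) * (C / D))"
    unfolding G_def s e A_def B_def C_def D_def by simp
  also have "ln ((A / B) * (C / D)) = ln A - ln B + ln C - ln D"
    using p by (simp add: ln_mult ln_div)
  finally show ?thesis unfolding psi_def phi_def A_def B_def C_def D_def by simp
qed

lemma G_right: assumes "x < y" 
  shows "G a x y = (psi a x - psi a (y - x)) / (2 * pi)"
proof -
  have s: "sgn (y - x) = 1" using assms by simp
  have e: "(x - y + 2 * pi * 1)\<^sup>2 = (2 * pi - (y - x))\<^sup>2" by (simp add: power2_eq_square algebra_simps)
  have e1: "(x - y)\<^sup>2 = (y - x)\<^sup>2" by (simp add: power2_eq_square algebra_simps)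
  define A where "A = 1 + a\<^sup>2 / x\<^sup>2"
  define B where "B = 1 + a\<^sup>2 / (y - x)\<^sup>2"
  define C where "C = 1 + a\<^sup>2 / (2 * pi - x)\<^sup>2"
  define D where "D = 1 + a\<^sup>2 / (2 * pi - (y - x))\<^sup>2"
  have p: "A > 0" "B > 0" "C > 0" "D > 0" unfolding A_def B_def C_def D_def
    by (simp_all add: add_pos_nonneg)
  have "G a x y = (1 / (2 * pi)) * ln ((A / B) * (C / D))"
    unfolding G_def s e e1 A_def B_def C_def D_def by simp
  also have "ln ((A / B) * (C / D)) = ln A - ln B + ln C - ln D"
    using p by (simp add: ln_mult ln_div)
  finally show ?thesis unfolding psi_def phi_def A_def B_def C_def D_def by simp
qed



locale setting =
  fixes a :: real and f :: "real \<Rightarrow> real" and x :: real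
  assumes a_pos: "a > 0"
    and sp: "smooth_periodic f"
    and ev: "\<forall>t. f (- t) = f t"
    and fpnn0: "\<forall>t\<in>{0..<pi}. deriv f t \<ge> 0"
    and x_pos: "0 < x" and x_le: "x \<le> pi / 2"
begin

abbreviation "fp \<equiv> deriv f"

definition F :: "real \<Rightarrow> real" where "F s = f (x - s) - f (x + s)"

lemma f_deriv: "(f has_real_derivative fp t) (at t)"
proof -
  have "((deriv ^^ 0) f) differentiable (at t)" using sp unfolding smooth_periodic_def smooth_fun_def by blast
  then show ?thesis by (simp add: DERIV_deriv_iff_real_differentiable)
qed

lemma f_cont: "continuous_on S f"
  by (meson DERIV_isCont continuous_at_imp_continuous_on f_deriv)

lemma fp_cont: "continuous_on S fp"
proof -
  have "((deriv ^^ 1) f) differentiable (at t)" for t using sp unfolding smooth_periodic_def smooth_fun_def by blast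
  then have "isCont fp t" for t by (simp add: differentiable_imp_continuous_within)
  then show ?thesis by (simp add: continuous_at_imp_continuous_on)
qed

lemma f_cont_at: "isCont f t" using DERIV_isCont f_deriv by blast

lemma f_per: "f (t + 2 * pi) = f t" using sp unfolding smooth_periodic_def by blast

lemma f_per_k: "f (t + 2 * pi * real k) = f t"
proof (induction k arbitrary: t)
  case 0 then show ?case by simp
next
  case (Suc k)
  have "f (t + 2 * pi * real (Suc k)) = f ((t + 2 * pi * real k) + 2 * pi)" by (simp add: algebra_simps)
  then show ?case using f_per Suc by simp
qed

lemma f_per_m: "f (t - 2 * pi) = f t" using f_per[of "t - 2 * pi"] by simp

lemma f_bdd: obtains M0 where "\<And>t. \<bar>f t\<bar> \<le> M0"
proof -
  have "bounded (range ((deriv ^^ 0) f))" using sp unfolding smooth_periodic_def by blast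
  then obtain M where "\<And>t. norm (f t) \<le> M" by (auto simp: bounded_iff)
  then show ?thesis using that by auto
qed

lemma fp_bdd: obtains M1 where "\<And>t. \<bar>fp t\<bar> \<le> M1" "M1 \<ge> 0"
proof -
  have "bounded (range ((deriv ^^ 1) f))" using sp unfolding smooth_periodic_def by blast
  then obtain M where M: "\<And>t. norm (fp t) \<le> M" by (auto simp: bounded_iff)
  then have "M \<ge> 0" by (meson norm_ge_zero order_trans)
  then show ?thesis using that M by auto
qed

definition M1 where "M1 = (SOME M. (\<forall>t. \<bar>fp t\<bar> \<le> M) \<and> M \<ge> 0)"

lemma M1: "\<bar>fp t\<bar> \<le> M1" "M1 \<ge> 0"
proof -
  have "\<exists>M. (\<forall>t. \<bar>fp t\<bar> \<le> M) \<and> M \<ge> 0" using fp_bdd by metis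
  from someI_ex[OF this] show "\<bar>fp t\<bar> \<le> M1" "M1 \<ge> 0" unfolding M1_def by auto
qed

lemma f_lip: "\<bar>f u - f v\<bar> \<le> M1 * \<bar>u - v\<bar>"
proof -
  have *: "\<bar>f u - f v\<bar> \<le> M1 * \<bar>u - v\<bar>" if vu: "v < u" for u v
  proof -
    obtain z where "f u - f v = (u - v) * fp z"
      using MVT2[OF vu, of f fp] f_deriv by auto
    then have "\<bar>f u - f v\<bar> = \<bar>u - v\<bar> * \<bar>fp z\<bar>" by (simp add: abs_mult)
    also have "\<dots> \<le> \<bar>u - v\<bar> * M1" by (intro mult_left_mono M1) auto
    finally show ?thesis by (simp add: mult.commute)
  qed
  show ?thesis
    using *[of u v] *[of v u] by (cases "u = v") (auto simp: abs_minus_commute linorder_neq_iff)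
qed

lemma fp_nonneg: assumes "0 \<le> t" "t \<le> pi" shows "fp t \<ge> 0"
proof (cases "t < pi")
  case True then show ?thesis using fpnn0 assms by auto
next
  case False
  then have tp: "t = pi" using assms by auto
  have "(fp \<longlongrightarrow> fp pi) (at_left pi)"
    using fp_cont[of UNIV] by (simp add: continuous_on_def filterlim_at_split isCont_def continuous_on_eq_continuous_at tendsto_within_subset)
  moreover have "eventually (\<lambda>t. 0 \<le> fp t) (at_left pi)"
    unfolding eventually_at_left[OF pi_gt_zero]
    using fpnn0 by (intro exI[of _ 0]) auto
  ultimately have "0 \<le> fp pi" by (rule tendsto_lowerbound) simp
  then show ?thesis using tp by simp
qed

lemma f_mono: assumes "0 \<le> u" "u \<le> v" "v \<le> pi" shows "f u \<le> f v"
  by (rule DERIV_nonneg_imp_nondecreasing[OF assms(2)])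
     (use assms f_deriv fp_nonneg in \<open>auto intro!: exI[of _ "fp _"]\<close>)

lemma F_nonpos: assumes "0 \<le> s" "s \<le> pi" shows "F s \<le> 0"
proof -
  have e1: "f (x - s) = f \<bar>x - s\<bar>" using ev by (cases "x \<le> s") (auto simp: abs_if, metis minus_diff_eq)
  show ?thesis
  proof (cases "x + s \<le> pi")
    case True
    then have "f \<bar>x - s\<bar> \<le> f (x + s)" using assms x_pos by (intro f_mono) auto
    then show ?thesis unfolding F_def e1 by simp
  next
    case False
    have "f (x + s) = f (2 * pi - x - s)"
      using f_per_m[of "x + s"] ev by (metis minus_diff_eq diff_diff_eq)
    moreover have "f \<bar>x - s\<bar> \<le> f (2 * pi - x - s)" using assms x_pos x_le False by (intro f_mono) auto
    ultimately show ?thesis unfolding F_def e1 by simp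
  qed
qed

lemma F_per: "F (s + 2 * pi * real k) = F s"
proof -
  have "f (x - (s + 2 * pi * real k)) = f (x - s)"
    using f_per_k[of "x - (s + 2 * pi * real k)" k] by simp
  moreover have "f (x + (s + 2 * pi * real k)) = f (x + s)"
    using f_per_k[of "x + s" k] by (simp add: algebra_simps)
  ultimately show ?thesis unfolding F_def by simp
qed

lemma F_refl: "F (2 * pi - s) = - F s"
proof -
  have "f (x - (2 * pi - s)) = f (x + s)" using f_per_m[of "x + s"] by (simp add: algebra_simps)
  moreover have "f (x + (2 * pi - s)) = f (x - s)" using f_per[of "x - s"] by (simp add: algebra_simps)
  ultimately show ?thesis unfolding F_def by simp
qed

lemma F_lip: "\<bar>F s\<bar> \<le> 2 * M1 * \<bar>s\<bar>"
  using f_lip[of "x - s" "x + s"] unfolding F_def by simp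

lemma F_cont: "continuous_on S F"
  unfolding F_def[abs_def] by (intro continuous_intros continuous_on_compose2[OF f_cont[of UNIV]]) auto

end



lemma inv_sq_has_integral:
  assumes a: "a > (0::real)"
  shows "((\<lambda>s. 1 / (s\<^sup>2 + a\<^sup>2)) has_integral (pi / (2 * a))) {0..}"
proof (rule has_integral_to_inf)
  show "(\<lambda>s. 1 / (s\<^sup>2 + a\<^sup>2)) integrable_on {0..y}" for y
    using a by (intro integrable_continuous_interval continuous_intros) (auto simp: add_pos_nonneg)
  have d: "((\<lambda>s. arctan (s / a) / a) has_real_derivative 1 / (s\<^sup>2 + a\<^sup>2)) (at s)" for s
  proof -
    have "((\<lambda>s. arctan (s / a) / a) has_real_derivative (1 / (1 + (s / a)\<^sup>2) * (1 / a)) / a) (at s)"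
      using a by (auto intro!: derivative_eq_intros simp: inverse_eq_divide)
    moreover have "(1 / (1 + (s / a)\<^sup>2) * (1 / a)) / a = 1 / (s\<^sup>2 + a\<^sup>2)"
    proof -
      have "1 + (s / a)\<^sup>2 = (s\<^sup>2 + a\<^sup>2) / a\<^sup>2" using a by (simp add: field_simps power_divide)
      then have "(1 / (1 + (s / a)\<^sup>2) * (1 / a)) / a = (a\<^sup>2 / (s\<^sup>2 + a\<^sup>2)) / a\<^sup>2"
        by (simp add: power2_eq_square)
      then show ?thesis using a by simp
    qed
    ultimately show ?thesis by simp
  qed
  have iy: "integral {0..y} (\<lambda>s. 1 / (s\<^sup>2 + a\<^sup>2)) = arctan (y / a) / a" if "y \<ge> 0" for y
  proof -
    have "((\<lambda>s. 1 / (s\<^sup>2 + a\<^sup>2)) has_integral (arctan (y / a) / a - arctan (0 / a) / a)) {0..y}"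
      using that d by (intro fundamental_theorem_of_calculus)
        (auto simp: has_real_derivative_iff_has_vector_derivative[symmetric] intro: has_field_derivative_at_within)
    then show ?thesis by (simp add: integral_unique)
  qed
  have ev: "eventually (\<lambda>y. integral {0..y} (\<lambda>s. 1 / (s\<^sup>2 + a\<^sup>2)) = arctan (y / a) / a) at_top"
    using eventually_ge_at_top[of 0] by (rule eventually_mono) (use iy in auto)
  have "((\<lambda>y. arctan (y / a) / a) \<longlongrightarrow> (pi / 2) / a) at_top"
  proof (intro tendsto_divide tendsto_const)
    have "filterlim (\<lambda>y. y * (1 / a)) at_top at_top" using a
      by (intro filterlim_at_top_mult_tendsto_pos[OF tendsto_const] filterlim_ident) auto
    then have "filterlim (\<lambda>y. y / a) at_top at_top" by simp
    then show "((\<lambda>y. arctan (y / a)) \<longlongrightarrow> pi / 2) at_top"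
      using tendsto_arctan_at_top filterlim_compose by blast
  qed (use a in auto)
  then show "((\<lambda>y. integral {0..y} (\<lambda>s. 1 / (s\<^sup>2 + a\<^sup>2))) \<longlongrightarrow> pi / (2 * a)) at_top"
    using ev by (simp add: tendsto_cong)
qed (simp add: add_nonneg_nonneg)

lemma inv_sq_absint:
  assumes a: "a > (0::real)" and c: "c \<ge> 0"
  shows "(\<lambda>s. C / (s\<^sup>2 + a\<^sup>2)) absolutely_integrable_on {c<..}"
proof -
  have "(\<lambda>s. 1 / (s\<^sup>2 + a\<^sup>2)) absolutely_integrable_on {0..}"
    using inv_sq_has_integral[OF a] by (intro nonnegative_absolutely_integrable_1) (auto simp: add_nonneg_nonneg)
  then have "(\<lambda>s. 1 / (s\<^sup>2 + a\<^sup>2)) absolutely_integrable_on {c<..}"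
    by (rule set_integrable_subset) (use c in auto)
  then have "(\<lambda>s. C *\<^sub>R (1 / (s\<^sup>2 + a\<^sup>2))) absolutely_integrable_on {c<..}"
    by (rule absolutely_integrable_scaleR_left)
  then show ?thesis by simp
qed

lemma absint_from_bound:
  fixes g :: "real \<Rightarrow> real"
  assumes a: "a > 0" and c: "c \<ge> 0" and cont: "continuous_on {c<..} g"
    and bd: "\<And>s. s > c \<Longrightarrow> \<bar>g s\<bar> \<le> C / (s\<^sup>2 + a\<^sup>2)"
  shows "g absolutely_integrable_on {c..}"
proof -
  have "g absolutely_integrable_on {c<..}"
  proof (rule measurable_bounded_by_integrable_imp_absolutely_integrable)
    show "g \<in> borel_measurable (lebesgue_on {c<..})"
      by (rule continuous_imp_measurable_on_sets_lebesgue[OF cont]) auto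
    show "(\<lambda>s. C / (s\<^sup>2 + a\<^sup>2)) integrable_on {c<..}"
      using inv_sq_absint[OF a c] by (simp add: absolutely_integrable_on_def)
  qed (use bd in auto)
  moreover have n1: "negligible {s \<in> {c..} - {c<..}. g s \<noteq> 0}"
    by (rule negligible_subset[of "{c}"]) auto
  moreover have n2: "negligible {s \<in> {c<..} - {c..}. g s \<noteq> 0}"
    by (rule negligible_subset[of "{}"]) auto
  ultimately show ?thesis
    using absolutely_integrable_spike_set_eq[OF n2 n1] by auto
qed

lemma absint_bdd:
  fixes g :: "real \<Rightarrow> real"
  assumes cont: "continuous_on {c<..d} g"
    and bd: "\<And>s. s \<in> {c<..d} \<Longrightarrow> \<bar>g s\<bar> \<le> B"
  shows "g absolutely_integrable_on {c..d}"
proof -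
  have "g absolutely_integrable_on {c<..d}"
  proof (rule measurable_bounded_by_integrable_imp_absolutely_integrable)
    show "g \<in> borel_measurable (lebesgue_on {c<..d})"
      by (rule continuous_imp_measurable_on_sets_lebesgue[OF cont]) auto
    have "(\<lambda>s. B) integrable_on {c..d}" by (rule integrable_const_ivl)
    then show "(\<lambda>s. B) integrable_on {c<..d}"
      by (rule integrable_spike_set) (auto intro: negligible_subset[of "{c}"])
  qed (use bd in auto)
  moreover have n1: "negligible {s \<in> {c..d} - {c<..d}. g s \<noteq> 0}"
    by (rule negligible_subset[of "{c}"]) auto
  moreover have n2: "negligible {s \<in> {c<..d} - {c..d}. g s \<noteq> 0}"
    by (rule negligible_subset[of "{}"]) auto
  ultimately show ?thesis
    using absolutely_integrable_spike_set_eq[OF n2 n1] by auto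
qed


context setting
begin

lemma K_cont: "continuous_on S (K a)" if "0 \<notin> S"
proof -
  have "\<forall>y\<in>S. pi * y * (y\<^sup>2 + a\<^sup>2) \<noteq> 0" using that a_pos
    by (auto simp: add_pos_nonneg)
  then show ?thesis unfolding K_def[abs_def] by (intro continuous_intros) auto
qed

lemma FK_bound: assumes "s > 0" shows "\<bar>F s * K a s\<bar> \<le> (2 * M1 * a\<^sup>2 / pi) / (s\<^sup>2 + a\<^sup>2)"
proof -
  have "\<bar>F s * K a s\<bar> = \<bar>F s\<bar> * K a s" using K_pos[OF a_pos assms] by (simp add: abs_mult)
  also have "\<dots> \<le> (2 * M1 * s) * K a s"
    using F_lip[of s] assms K_pos[OF a_pos assms] by (intro mult_right_mono) auto
  also have "\<dots> = 2 * M1 * (s * K a s)" by simp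
  also have "\<dots> = (2 * M1 * a\<^sup>2 / pi) / (s\<^sup>2 + a\<^sup>2)" using yK_eq[of s a] assms by simp
  finally show ?thesis .
qed

lemma FK_bound2: assumes "s \<ge> 0" shows "\<bar>F s * K a s\<bar> \<le> 2 * M1 / pi"
proof (cases "s = 0")
  case True then show ?thesis using M1 by (simp add: K_def)
next
  case False
  then have "\<bar>F s * K a s\<bar> \<le> (2 * M1 * a\<^sup>2 / pi) / (s\<^sup>2 + a\<^sup>2)" using FK_bound assms by simp
  also have "\<dots> \<le> (2 * M1 * a\<^sup>2 / pi) / a\<^sup>2"
    using a_pos M1 by (intro divide_left_mono mult_pos_pos) (auto simp: add_pos_nonneg add_nonneg_pos)
  also have "\<dots> = 2 * M1 / pi" using a_pos by simp
  finally show ?thesis .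
qed

lemma FK_absint: "(\<lambda>s. F s * K a s) absolutely_integrable_on {0..}"
  by (rule absint_from_bound[OF a_pos order_refl _ FK_bound])
     (auto intro!: continuous_intros F_cont K_cont)

lemma FK_absint_sub: "S \<in> sets lebesgue \<Longrightarrow> S \<subseteq> {0..} \<Longrightarrow> (\<lambda>s. F s * K a s) absolutely_integrable_on S"
  using set_integrable_subset[OF FK_absint] by blast

lemma FK_int_sub: "S \<in> sets lebesgue \<Longrightarrow> S \<subseteq> {0..} \<Longrightarrow> (\<lambda>s. F s * K a s) integrable_on S"
  using FK_absint_sub absolutely_integrable_on_def by blast

definition Hval where "Hval = integral {0..} (\<lambda>s. F s * K a s)"

lemma I_eps: assumes e: "\<epsilon> > 0"
  shows "integral {y. \<epsilon> \<le> \<bar>y\<bar>} (\<lambda>y. f (x - y) * K a y) = Hval - integral {0..\<epsilon>} (\<lambda>s. F s * K a s)"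
proof -
  define g where "g = (\<lambda>y. f (x - y) * K a y)"
  obtain M0 where M0: "\<And>t. \<bar>f t\<bar> \<le> M0" using f_bdd by blast
  have Kb: "K a s \<le> (a\<^sup>2 / (pi * \<epsilon>)) / (s\<^sup>2 + a\<^sup>2)" if "s > \<epsilon>" for s
  proof -
    have "K a s = a\<^sup>2 / (pi * s * (s\<^sup>2 + a\<^sup>2))" by (simp add: K_def)
    also have "\<dots> \<le> a\<^sup>2 / (pi * \<epsilon> * (s\<^sup>2 + a\<^sup>2))"
      using that e a_pos by (intro divide_left_mono mult_right_mono mult_pos_pos) (auto simp: add_pos_nonneg)
    finally show ?thesis by simp
  qed
  define C0 where "C0 = M0 * (a\<^sup>2 / (pi * \<epsilon>))"
  have gb: "\<bar>f z * K a s\<bar> \<le> C0 / (s\<^sup>2 + a\<^sup>2)" if "s > \<epsilon>" for s z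
  proof -
    have "\<bar>f z * K a s\<bar> = \<bar>f z\<bar> * K a s" using K_pos[OF a_pos, of s] that e by (simp add: abs_mult)
    also have "\<dots> \<le> M0 * ((a\<^sup>2 / (pi * \<epsilon>)) / (s\<^sup>2 + a\<^sup>2))"
    proof (rule mult_mono)
      show "0 \<le> M0" using M0[of 0] by linarith
      show "0 \<le> K a s" using K_pos[OF a_pos, of s] that e by simp
    qed (use M0 Kb[OF that] in auto)
    finally show ?thesis unfolding C0_def by simp
  qed
  have cK: "continuous_on {\<epsilon><..} (K a)" using e by (intro K_cont) auto
  have g1: "g absolutely_integrable_on {\<epsilon>..}" unfolding g_def
    by (rule absint_from_bound[OF a_pos _ _ gb])
       (use e in \<open>auto intro!: continuous_intros cK continuous_on_compose2[OF f_cont[of UNIV]]\<close>)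
  have g2: "(\<lambda>s. g (- s)) absolutely_integrable_on {\<epsilon>..}" unfolding g_def K_odd
  proof -
    have "(\<lambda>s. f (x + s) * K a s) absolutely_integrable_on {\<epsilon>..}"
      by (rule absint_from_bound[OF a_pos _ _ gb])
         (use e in \<open>auto intro!: continuous_intros cK continuous_on_compose2[OF f_cont[of UNIV]]\<close>)
    then have "(\<lambda>s. (-1) *\<^sub>R (f (x + s) * K a s)) absolutely_integrable_on {\<epsilon>..}"
      by (rule absolutely_integrable_scaleR_left)
    then show "(\<lambda>s. f (x - - s) * - K a s) absolutely_integrable_on {\<epsilon>..}" by simp
  qed
  have refl: "g absolutely_integrable_on {..-\<epsilon>} \<and> integral {..-\<epsilon>} g = integral {\<epsilon>..} (\<lambda>s. g (- s))"
  proof -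
    have i1: "uminus ` {\<epsilon>..} \<subseteq> {..-\<epsilon>}" by auto
    have i2: "uminus ` {..-\<epsilon>} \<subseteq> {\<epsilon>..}" by auto
    have i3: "{\<epsilon>..} \<in> sets lebesgue" by simp
    show ?thesis
      using has_absolute_integral_reflect_real[OF i1 i2 i3, of g "integral {\<epsilon>..} (\<lambda>s. g (- s))"] g2
      by blast
  qed
  have U: "{y. \<epsilon> \<le> \<bar>y\<bar>} = {\<epsilon>..} \<union> {..-\<epsilon>}" by auto
  have "integral {y. \<epsilon> \<le> \<bar>y\<bar>} g = integral {\<epsilon>..} g + integral {..-\<epsilon>} g"
  proof -
    have "{\<epsilon>..} \<inter> {..-\<epsilon>} = {}" using e by auto
    then show ?thesis
      unfolding U using g1 refl e by (intro integral_Un) (auto simp: absolutely_integrable_on_def)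
  qed
  also have "\<dots> = integral {\<epsilon>..} g + integral {\<epsilon>..} (\<lambda>s. g (- s))" using refl by simp
  also have "\<dots> = integral {\<epsilon>..} (\<lambda>s. g s + g (- s))"
    using g1 g2 by (intro integral_add[symmetric]) (auto simp: absolutely_integrable_on_def)
  also have "\<dots> = integral {\<epsilon>..} (\<lambda>s. F s * K a s)"
    unfolding g_def F_def K_odd by (simp add: algebra_simps)
  finally have 1: "integral {y. \<epsilon> \<le> \<bar>y\<bar>} g = integral {\<epsilon>..} (\<lambda>s. F s * K a s)" .
  have U2: "{0..} = {0..\<epsilon>} \<union> {\<epsilon>..}" using e by auto
  have "Hval = integral {0..\<epsilon>} (\<lambda>s. F s * K a s) + integral {\<epsilon>..} (\<lambda>s. F s * K a s)"
  proof -
    have n: "negligible ({0..\<epsilon>} \<inter> {\<epsilon>..})" by (rule negligible_subset[of "{\<epsilon>}"]) auto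
    show ?thesis
      unfolding Hval_def U2 using e by (intro integral_Un FK_int_sub n) auto
  qed
  then show ?thesis using 1 unfolding g_def by simp
qed

lemma H_eq: "H a f x = Hval"
proof -
  have b: "\<bar>integral {0..\<epsilon>} (\<lambda>s. F s * K a s)\<bar> \<le> (2 * M1 / pi) * \<epsilon>" if "\<epsilon> > 0" for \<epsilon>
  proof -
    have i: "((\<lambda>s. F s * K a s) has_integral integral {0..\<epsilon>} (\<lambda>s. F s * K a s)) (cbox 0 \<epsilon>)"
      using FK_int_sub[of "{0..\<epsilon>}"] by (simp add: integrable_integral)
    show ?thesis using has_integral_bound[OF _ i, of "2 * M1 / pi"] that M1 FK_bound2 by simp
  qed
  have "((\<lambda>\<epsilon>. integral {0..\<epsilon>} (\<lambda>s. F s * K a s)) \<longlongrightarrow> 0) (at_right 0)"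
  proof (rule Lim_null_comparison)
    show "\<forall>\<^sub>F \<epsilon> in at_right 0. norm (integral {0..\<epsilon>} (\<lambda>s. F s * K a s)) \<le> (2 * M1 / pi) * \<epsilon>"
      using eventually_at_right_less[of "0::real"] by (rule eventually_mono) (use b in simp)
    have "((\<lambda>\<epsilon>. (2 * M1 / pi) * \<epsilon>) \<longlongrightarrow> (2 * M1 / pi) * 0) (at_right (0::real))"
      by (intro tendsto_mult tendsto_const tendsto_ident_at)
    then show "((\<lambda>\<epsilon>. (2 * M1 / pi) * \<epsilon>) \<longlongrightarrow> 0) (at_right 0)" by simp
  qed
  then have "((\<lambda>\<epsilon>. Hval - integral {0..\<epsilon>} (\<lambda>s. F s * K a s)) \<longlongrightarrow> Hval - 0) (at_right 0)"
    by (intro tendsto_diff tendsto_const)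
  then have t: "((\<lambda>\<epsilon>. Hval - integral {0..\<epsilon>} (\<lambda>s. F s * K a s)) \<longlongrightarrow> Hval) (at_right 0)" by simp
  have ev: "eventually (\<lambda>\<epsilon>. Hval - integral {0..\<epsilon>} (\<lambda>s. F s * K a s) =
      integral {y. \<epsilon> \<le> \<bar>y\<bar>} (\<lambda>y. f (x - y) * K a y)) (at_right 0)"
    using eventually_at_right_less[of "0::real"] by (rule eventually_mono) (rule I_eps[symmetric])
  have "((\<lambda>\<epsilon>. integral {y. \<epsilon> \<le> \<bar>y\<bar>} (\<lambda>y. f (x - y) * K a y)) \<longlongrightarrow> Hval) (at_right 0)"
    by (rule Lim_transform_eventually[OF t ev])
  moreover have "\<not> trivial_limit (at_right (0::real))" by (rule trivial_limit_at_right_real)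
  ultimately show ?thesis unfolding H_def PV_integral_def by (intro tendsto_Lim)
qed

end



lemma integral_refl_shift:
  fixes g :: "real \<Rightarrow> real"
  shows "integral {a..b} (\<lambda>t. g (c - t)) = integral {c-b..c-a} g"
proof -
  have "integral {c-b..c-a} g = integral {(c-b)-c..(c-a)-c} (\<lambda>u. g (u + c))"
    by (rule integral_shift_real_ivl[symmetric])
  also have "\<dots> = integral {-b..-a} (\<lambda>u. g (u + c))" by simp
  also have "\<dots> = integral {a..b} (\<lambda>t. g (- t + c))"
    using Henstock_Kurzweil_Integration.integral_reflect_real[of b a "\<lambda>t. g (- t + c)"] by simp
  finally show ?thesis by (simp add: algebra_simps)
qed

context setting
begin

lemma sub2pi: assumes "S \<subseteq> {2*pi..}" shows "S \<subseteq> {0::real..}"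
proof
  fix t assume "t \<in> S"
  then have "2*pi \<le> t" using assms by auto
  then have "0 \<le> t" using pi_gt_zero by linarith
  then show "t \<in> {0..}" by simp
qed

lemma twopi_ge: "2*pi \<le> t \<Longrightarrow> 0 \<le> (t::real)"
  using pi_gt_zero by linarith

lemma period_nonpos:
  assumes c: "0 \<le> c" "c \<le> pi" and T: "T = 2 * pi * real k" and Tc: "0 < T + c"
  shows "integral {T+c..T+2*pi-c} (\<lambda>s. F s * K a s) \<le> 0"
proof -
  have T0: "T \<ge> 0" using T by simp
  have int: "(\<lambda>s. F s * K a s) integrable_on {T+c..T+2*pi-c}"
    using T0 c by (intro FK_int_sub) auto
  have "integral {T+c..T+2*pi-c} (\<lambda>s. F s * K a s)
      = integral {T+c..T+pi} (\<lambda>s. F s * K a s) + integral {T+pi..T+2*pi-c} (\<lambda>s. F s * K a s)"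
    using c int by (intro Henstock_Kurzweil_Integration.integral_combine[symmetric]) auto
  also have "integral {T+c..T+pi} (\<lambda>s. F s * K a s) = integral {c..pi} (\<lambda>s. F s * K a (s + T))"
  proof -
    have "integral {T+c..T+pi} (\<lambda>s. F s * K a s) = integral {(T+c)-T..(T+pi)-T} (\<lambda>s. F (s + T) * K a (s + T))"
      by (rule integral_shift_real_ivl[symmetric])
    also have "\<dots> = integral {c..pi} (\<lambda>s. F s * K a (s + T))"
      using F_per[of _ k] T by simp
    finally show ?thesis .
  qed
  also have "integral {T+pi..T+2*pi-c} (\<lambda>s. F s * K a s) = integral {c..pi} (\<lambda>s. - F s * K a (T + 2*pi - s))"
  proof -
    have "integral {T+pi..T+2*pi-c} (\<lambda>s. F s * K a s) = integral {c..pi} (\<lambda>t. F (T + 2*pi - t) * K a (T + 2*pi - t))"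
      using integral_refl_shift[of c pi "\<lambda>s. F s * K a s" "T + 2*pi"] by (simp add: algebra_simps)
    also have "\<dots> = integral {c..pi} (\<lambda>s. - F s * K a (T + 2*pi - s))"
    proof (rule integral_cong)
      fix t
      have "F (T + 2*pi - t) = F ((2*pi - t) + 2 * pi * real k)" using T by (simp add: algebra_simps)
      also have "\<dots> = - F t" using F_per F_refl by simp
      finally show "F (T + 2*pi - t) * K a (T + 2*pi - t) = - F t * K a (T + 2*pi - t)" by simp
    qed
    finally show ?thesis .
  qed
  also have "integral {c..pi} (\<lambda>s. F s * K a (s + T)) + integral {c..pi} (\<lambda>s. - F s * K a (T + 2*pi - s))
      = integral {c..pi} (\<lambda>s. F s * K a (s + T) + - F s * K a (T + 2*pi - s))"
  proof (rule integral_add[symmetric])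
    show "(\<lambda>s. F s * K a (s + T)) integrable_on {c..pi}"
      using Tc by (intro integrable_continuous_interval continuous_intros F_cont continuous_on_compose2[OF K_cont[of "{T+c..}"]]) auto
    show "(\<lambda>s. - F s * K a (T + 2*pi - s)) integrable_on {c..pi}"
      using Tc c T0 by (intro integrable_continuous_interval continuous_intros F_cont continuous_on_compose2[OF K_cont[of "{T+pi..}"]]) auto
  qed
  also have "\<dots> \<le> integral {c..pi} (\<lambda>s. 0)"
  proof (rule integral_le)
    show "(\<lambda>s. F s * K a (s + T) + - F s * K a (T + 2*pi - s)) integrable_on {c..pi}"
      using Tc c T0 by (intro integrable_continuous_interval continuous_intros F_cont
          continuous_on_compose2[OF K_cont[of "{T+pi..}"]] continuous_on_compose2[OF K_cont[of "{T+c..}"]]) auto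
    fix s assume s: "s \<in> {c..pi}"
    have "F s \<le> 0" using s c by (intro F_nonpos) auto
    moreover have "K a (T + 2*pi - s) \<le> K a (s + T)"
      using s Tc by (intro K_anti a_pos) auto
    ultimately have "F s * (K a (s + T) - K a (T + 2*pi - s)) \<le> 0"
      by (intro mult_nonpos_nonneg) auto
    then show "F s * K a (s + T) + - F s * K a (T + 2*pi - s) \<le> 0"
      by (simp add: algebra_simps)
  qed auto
  finally show ?thesis by simp
qed

lemma tail_nonpos: "integral {2*pi..} (\<lambda>s. F s * K a s) \<le> 0"
proof -
  define FK where "FK = (\<lambda>s. F s * K a s)"
  have fin: "integral {2*pi..2*pi*(real N + 1)} FK \<le> 0" for N
  proof (induction N)
    case 0 then show ?case by simp
  next
    case (Suc N)
    have "integral {2*pi..2*pi*(real (Suc N) + 1)} FK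
        = integral {2*pi..2*pi*(real N + 1)} FK + integral {2*pi*(real N + 1)..2*pi*(real (Suc N) + 1)} FK"
      unfolding FK_def by (intro Henstock_Kurzweil_Integration.integral_combine[symmetric] FK_int_sub sub2pi) auto
    also have "integral {2*pi*(real N + 1)..2*pi*(real (Suc N) + 1)} FK \<le> 0"
    proof -
      have p1: "2*pi*(real N + 1) = 2 * pi * real (Suc N)" by simp
      have p2: "0 < 2*pi*(real N + 1) + 0" using pi_gt_zero by simp
      have e: "{2*pi*(real N + 1)+0..2*pi*(real N + 1)+2*pi-0} = {2*pi*(real N + 1)..2*pi*(real (Suc N) + 1)}"
        by (simp add: algebra_simps)
      show ?thesis using period_nonpos[OF order_refl pi_ge_zero p1 p2] unfolding FK_def e .
    qed
    finally show ?case using Suc by simp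
  qed
  define fN where "fN = (\<lambda>N t. if t \<in> {..2*pi*(real N + 1)} then FK t else 0)"
  have ie: "integral {2*pi..} (fN N) = integral {2*pi..2*pi*(real N + 1)} FK" for N
  proof -
    have "integral {2*pi..} (fN N) = integral ({..2*pi*(real N + 1)} \<inter> {2*pi..}) FK"
      unfolding fN_def by (rule integral_restrict_Int)
    also have "{..2*pi*(real N + 1)} \<inter> {2*pi..} = {2*pi..2*pi*(real N + 1)}" by auto
    finally show ?thesis .
  qed
  have absi: "FK absolutely_integrable_on {2*pi..}" unfolding FK_def by (intro FK_absint_sub sub2pi) auto
  have "(\<lambda>N. integral {2*pi..} (fN N)) \<longlonglongrightarrow> integral {2*pi..} FK"
  proof (rule dominated_convergence(2))
    show "fN N integrable_on {2*pi..}" for N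
    proof -
      have "FK integrable_on ({..2*pi*(real N + 1)} \<inter> {2*pi..})" unfolding FK_def by (intro FK_int_sub sub2pi) auto
      then show ?thesis unfolding fN_def integrable_on_def using has_integral_restrict_Int by blast
    qed
    show "(\<lambda>t. norm (FK t)) integrable_on {2*pi..}" using absi by (simp add: absolutely_integrable_on_def)
    show "norm (fN N t) \<le> norm (FK t)" for N t unfolding fN_def by auto
    fix t :: real
    obtain N0 :: nat where "t \<le> 2*pi*(real N0 + 1)"
    proof -
      obtain n :: nat where "t / (2*pi) \<le> real n" using real_arch_simple by blast
      then have "t \<le> 2*pi*real n" by (simp add: field_simps)
      moreover have "2*pi*(real n + 1) = 2*pi*real n + 2*pi" by (simp add: algebra_simps)
      ultimately have "t \<le> 2*pi*(real n + 1)" using pi_gt_zero by linarith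
      then show ?thesis using that by blast
    qed
    then have "eventually (\<lambda>N. fN N t = FK t) sequentially"
      unfolding fN_def eventually_sequentially
      by (intro exI[of _ N0]) (auto intro: order_trans)
    then show "(\<lambda>N. fN N t) \<longlonglongrightarrow> FK t" by (rule tendsto_eventually)
  qed
  then have "integral {2*pi..} FK \<le> 0"
    by (rule tendsto_upperbound) (use fin ie in auto)
  then show ?thesis unfolding FK_def .
qed

lemma main_ineq: "Hval \<le> integral {0..x} (\<lambda>s. F s * Q a s)"
proof -
  define FK where "FK = (\<lambda>s. F s * K a s)"
  have x2: "x < 2 * pi - x" using x_le x_pos pi_gt_zero by linarith
  have "Hval = integral {0..2*pi} FK + integral {2*pi..} FK"
  proof -
    have U: "{0..} = {0..2*pi} \<union> {2*pi..}" by (auto dest: twopi_ge)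
    have n: "negligible ({0..2*pi} \<inter> {2*pi..})" by (rule negligible_subset[of "{2*pi}"]) auto
    show ?thesis unfolding Hval_def U FK_def
      by (intro integral_Un FK_int_sub n) (auto dest: twopi_ge)
  qed
  also have "integral {0..2*pi} FK = integral {0..x} FK + integral {x..2*pi-x} FK + integral {2*pi-x..2*pi} FK"
  proof -
    have i: "FK integrable_on {0..2*pi}" unfolding FK_def by (intro FK_int_sub) auto
    have "integral {0..2*pi} FK = integral {0..2*pi-x} FK + integral {2*pi-x..2*pi} FK"
      using i x_pos x2 by (intro Henstock_Kurzweil_Integration.integral_combine[symmetric]) auto
    moreover have "integral {0..2*pi-x} FK = integral {0..x} FK + integral {x..2*pi-x} FK"
      using i x_pos x2 by (intro Henstock_Kurzweil_Integration.integral_combine[symmetric] integrable_on_subinterval[OF i]) auto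
    ultimately show ?thesis by simp
  qed
  also have "integral {2*pi-x..2*pi} FK = integral {0..x} (\<lambda>s. - F s * K a (2*pi - s))"
  proof -
    have "integral {2*pi-x..2*pi} FK = integral {0..x} (\<lambda>t. FK (2*pi - t))"
      using integral_refl_shift[of 0 x FK "2*pi"] by simp
    also have "\<dots> = integral {0..x} (\<lambda>s. - F s * K a (2*pi - s))"
      unfolding FK_def using F_refl by simp
    finally show ?thesis .
  qed
  also have "integral {0..x} FK + integral {x..2*pi-x} FK + integral {0..x} (\<lambda>s. - F s * K a (2*pi - s))
      = integral {0..x} (\<lambda>s. F s * Q a s) + integral {x..2*pi-x} FK"
  proof -
    have "integral {0..x} FK + integral {0..x} (\<lambda>s. - F s * K a (2*pi - s))
        = integral {0..x} (\<lambda>s. FK s + - F s * K a (2*pi - s))"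
    proof (rule integral_add[symmetric])
      show "FK integrable_on {0..x}" unfolding FK_def by (intro FK_int_sub) auto
      show "(\<lambda>s. - F s * K a (2*pi - s)) integrable_on {0..x}"
      proof -
        have z: "0 \<notin> {2*pi-x..}" using x2 x_pos by auto
        show ?thesis
          using x2 by (intro integrable_continuous_interval continuous_intros F_cont
            continuous_on_compose2[OF K_cont[OF z]]) auto
      qed
    qed
    also have "\<dots> = integral {0..x} (\<lambda>s. F s * Q a s)"
      unfolding FK_def Q_def by (simp add: algebra_simps)
    finally show ?thesis by simp
  qed
  finally have "Hval = integral {0..x} (\<lambda>s. F s * Q a s) + integral {x..2*pi-x} FK + integral {2*pi..} FK" .
  moreover have "integral {x..2*pi-x} FK \<le> 0"
    using period_nonpos[of x 0 0] x_pos x_le unfolding FK_def by simp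
  moreover have "integral {2*pi..} FK \<le> 0" unfolding FK_def by (rule tail_nonpos)
  ultimately show ?thesis by linarith
qed

end



context setting
begin

lemma Q_cont: "continuous_on {0<..x} (Q a)"
proof -
  have z1: "0 \<notin> {0<..x}" by auto
  have z2: "0 \<notin> {2*pi-x..}" using x_pos x_le pi_gt_zero by auto
  show ?thesis unfolding Q_def[abs_def]
    by (intro continuous_intros K_cont[OF z1] continuous_on_compose2[OF K_cont[OF z2]]) (use x_le in auto)
qed

lemma Q_cont2: "0 < d \<Longrightarrow> continuous_on {d..x} (Q a)"
  by (rule continuous_on_subset[OF Q_cont]) auto

lemma Q_le_K: assumes "0 < s" "s \<le> x" shows "\<bar>Q a s\<bar> \<le> K a s"
proof -
  have "Q a s \<ge> 0" using assms x_le by (intro Q_nonneg a_pos) auto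
  moreover have "K a (2*pi - s) > 0" using assms x_le pi_gt_zero by (intro K_pos a_pos) auto
  ultimately show ?thesis unfolding Q_def by auto
qed

lemma FQ_bound: assumes "0 < s" "s \<le> x" shows "\<bar>F s * Q a s\<bar> \<le> 2 * M1 / pi"
proof -
  have "\<bar>F s * Q a s\<bar> = \<bar>F s\<bar> * \<bar>Q a s\<bar>" by (simp add: abs_mult)
  also have "\<dots> \<le> (2 * M1 * s) * (1 / (pi * s))"
    using F_lip[of s] Q_le_K[OF assms] K_le[OF a_pos assms(1)] assms M1(2)
    by (intro mult_mono) auto
  also have "\<dots> = 2 * M1 / pi" using assms by simp
  finally show ?thesis .
qed

lemma FQ_absint: "(\<lambda>s. F s * Q a s) absolutely_integrable_on {0..x}"
  by (rule absint_bdd[of 0 x _ "2 * M1 / pi"]) (auto intro!: continuous_intros F_cont Q_cont FQ_bound)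

lemma FQ_int: "(\<lambda>s. F s * Q a s) integrable_on {0..x}"
  using FQ_absint absolutely_integrable_on_def by blast

lemma hcont: "continuous_on S (\<lambda>y. f y - f x)"
  by (intro continuous_intros f_cont)

lemma left_part:
  assumes d: "0 < d" "d < x"
  shows "((\<lambda>y. fp y * G a x y) has_integral
     ((f (x - d) - f x) * ((psi a x - psi a d) / (2 * pi)) + integral {d..x} (\<lambda>s. (f (x - s) - f x) * Q a s))) {0..x-d}"
proof -
  define g where "g = (\<lambda>y. (psi a x - psi a (x - y)) / (2 * pi))"
  define g' where "g' = (\<lambda>y. - Q a (x - y))"
  have gd: "(g has_real_derivative g' y) (at y)" if "y \<in> {0..x-d}" for y
  proof -
    have "x - y \<noteq> 0" "x - y \<noteq> 2 * pi" using that d x_le pi_gt_zero by auto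
    then have "((\<lambda>y. psi a (x - y)) has_real_derivative (- 2 * pi * Q a (x - y)) * (0 - 1)) (at y)"
      by (intro DERIV_chain2[of "psi a"] psi_deriv a_pos derivative_eq_intros) auto
    then have "((\<lambda>y. (psi a x - psi a (x - y)) / (2 * pi)) has_real_derivative (0 - (- 2 * pi * Q a (x - y)) * (0 - 1)) / (2 * pi)) (at y)"
      by (intro derivative_eq_intros) auto
    then show ?thesis unfolding g_def g'_def by simp
  qed
  have gc: "continuous_on {0..x-d} g"
    using gd by (meson DERIV_isCont continuous_at_imp_continuous_on)
  have J: "((\<lambda>y. (f y - f x) * g' y) has_integral integral {0..x-d} (\<lambda>y. (f y - f x) * g' y)) {0..x-d}"
  proof (intro integrable_integral integrable_continuous_interval continuous_intros f_cont)
    have "continuous_on {0..x-d} (\<lambda>y. Q a (x - y))"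
      by (intro continuous_on_compose2[OF Q_cont2[OF d(1)]] continuous_intros) (use d in auto)
    then show "continuous_on {0..x-d} g'" unfolding g'_def by (intro continuous_intros)
  qed
  have Jv: "integral {0..x-d} (\<lambda>y. (f y - f x) * g' y) = - integral {d..x} (\<lambda>s. (f (x - s) - f x) * Q a s)"
  proof -
    have "integral {0..x-d} (\<lambda>y. (f y - f x) * g' y) = integral {0..x-d} (\<lambda>t. (\<lambda>s. - ((f (x - s) - f x) * Q a s)) (x - t))"
      unfolding g'_def by simp
    also have "\<dots> = integral {x-(x-d)..x-0} (\<lambda>s. - ((f (x - s) - f x) * Q a s))"
      by (rule integral_refl_shift)
    also have "\<dots> = - integral {d..x} (\<lambda>s. (f (x - s) - f x) * Q a s)"
      by (simp add: integral_neg)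
    finally show ?thesis .
  qed
  have g0: "g 0 = 0" unfolding g_def by simp
  have gb: "g (x - d) = (psi a x - psi a d) / (2 * pi)" unfolding g_def by simp
  have ibp: "((\<lambda>y. fp y * g y) has_integral
      ((f (x - d) - f x) * g (x - d) - (f 0 - f x) * g 0 - integral {0..x-d} (\<lambda>y. (f y - f x) * g' y))) {0..x-d}"
  proof (rule integration_by_parts[OF bounded_bilinear_mult])
    show "0 \<le> x - d" using d by simp
    show "continuous_on {0..x - d} (\<lambda>y. f y - f x)" by (rule hcont)
    show "continuous_on {0..x - d} g" by (rule gc)
    show "((\<lambda>y. f y - f x) has_vector_derivative fp t) (at t)" for t
      using f_deriv[of t] by (auto intro!: derivative_eq_intros simp: has_real_derivative_iff_has_vector_derivative[symmetric])
    show "(g has_vector_derivative g' t) (at t)" if "t \<in> {0..x - d}" for t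
      using gd[OF that] by (simp add: has_real_derivative_iff_has_vector_derivative)
  qed (use J in simp)
  have "((\<lambda>y. fp y * G a x y) has_integral
      ((f (x - d) - f x) * g (x - d) - (f 0 - f x) * g 0 - integral {0..x-d} (\<lambda>y. (f y - f x) * g' y))) {0..x-d}"
  proof (rule has_integral_eq[OF _ ibp])
    fix y assume "y \<in> {0..x-d}"
    then have "G a x y = g y" unfolding g_def using d x_le pi_gt_zero by (intro G_left) auto
    then show "fp y * g y = fp y * G a x y" by simp
  qed
  then show ?thesis unfolding g0 gb Jv by simp
qed

lemma right_part:
  assumes d: "0 < d" "d < x"
  shows "((\<lambda>y. fp y * G a x y) has_integral
     (- (f (x + d) - f x) * ((psi a x - psi a d) / (2 * pi)) - integral {d..x} (\<lambda>s. (f (x + s) - f x) * Q a s))) {x+d..2*x}"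
proof -
  define g where "g = (\<lambda>y. (psi a x - psi a (y - x)) / (2 * pi))"
  define g' where "g' = (\<lambda>y. Q a (y - x))"
  have gd: "(g has_real_derivative g' y) (at y)" if "y \<in> {x+d..2*x}" for y
  proof -
    have "y - x \<noteq> 0" "y - x \<noteq> 2 * pi" using that d x_le pi_gt_zero by auto
    then have "((\<lambda>y. psi a (y - x)) has_real_derivative (- 2 * pi * Q a (y - x)) * (1 - 0)) (at y)"
      by (intro DERIV_chain2[of "psi a"] psi_deriv a_pos derivative_eq_intros) auto
    then have "((\<lambda>y. (psi a x - psi a (y - x)) / (2 * pi)) has_real_derivative (0 - (- 2 * pi * Q a (y - x)) * (1 - 0)) / (2 * pi)) (at y)"
      by (intro derivative_eq_intros) auto
    then show ?thesis unfolding g_def g'_def by simp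
  qed
  have gc: "continuous_on {x+d..2*x} g"
    using gd by (meson DERIV_isCont continuous_at_imp_continuous_on)
  have J: "((\<lambda>y. (f y - f x) * g' y) has_integral integral {x+d..2*x} (\<lambda>y. (f y - f x) * g' y)) {x+d..2*x}"
  proof (intro integrable_integral integrable_continuous_interval continuous_intros f_cont)
    have "continuous_on {x+d..2*x} (\<lambda>y. Q a (y - x))"
      by (intro continuous_on_compose2[OF Q_cont2[OF d(1)]] continuous_intros) (use d in auto)
    then show "continuous_on {x+d..2*x} g'" unfolding g'_def by simp
  qed
  have Jv: "integral {x+d..2*x} (\<lambda>y. (f y - f x) * g' y) = integral {d..x} (\<lambda>s. (f (x + s) - f x) * Q a s)"
  proof -
    have "integral {d..x} (\<lambda>s. (f (x + s) - f x) * Q a s) = integral {(x+d)-x..(2*x)-x} (\<lambda>s. (\<lambda>y. (f y - f x) * g' y) (s + x))"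
      unfolding g'_def by (simp add: add.commute)
    also have "\<dots> = integral {x+d..2*x} (\<lambda>y. (f y - f x) * g' y)"
      by (rule integral_shift_real_ivl)
    finally show ?thesis by simp
  qed
  have g2: "g (2 * x) = 0" unfolding g_def by simp
  have gb: "g (x + d) = (psi a x - psi a d) / (2 * pi)" unfolding g_def by simp
  have ibp: "((\<lambda>y. fp y * g y) has_integral
      ((f (2 * x) - f x) * g (2 * x) - (f (x + d) - f x) * g (x + d) - integral {x+d..2*x} (\<lambda>y. (f y - f x) * g' y))) {x+d..2*x}"
  proof (rule integration_by_parts[OF bounded_bilinear_mult])
    show "x + d \<le> 2 * x" using d by simp
    show "continuous_on {x+d..2*x} (\<lambda>y. f y - f x)" by (rule hcont)
    show "continuous_on {x+d..2*x} g" by (rule gc)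
    show "((\<lambda>y. f y - f x) has_vector_derivative fp t) (at t)" for t
      using f_deriv[of t] by (auto intro!: derivative_eq_intros simp: has_real_derivative_iff_has_vector_derivative[symmetric])
    show "(g has_vector_derivative g' t) (at t)" if "t \<in> {x+d..2*x}" for t
      using gd[OF that] by (simp add: has_real_derivative_iff_has_vector_derivative)
  qed (use J in simp)
  have "((\<lambda>y. fp y * G a x y) has_integral
      ((f (2 * x) - f x) * g (2 * x) - (f (x + d) - f x) * g (x + d) - integral {x+d..2*x} (\<lambda>y. (f y - f x) * g' y))) {x+d..2*x}"
  proof (rule has_integral_eq[OF _ ibp])
    fix y assume "y \<in> {x+d..2*x}"
    then have "G a x y = g y" unfolding g_def using d by (intro G_right) auto
    then show "fp y * g y = fp y * G a x y" by simp
  qed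
  then show ?thesis unfolding g2 gb Jv by (simp only: mult_zero_right diff_0 minus_mult_left)
qed

end



context setting
begin

definition dk :: "nat \<Rightarrow> real" where "dk k = x / (real k + 2)"
definition Bd :: "real \<Rightarrow> real" where "Bd d = (f (x - d) - f (x + d)) * ((psi a x - psi a d) / (2 * pi))"
definition fk :: "nat \<Rightarrow> real \<Rightarrow> real" where
  "fk k y = (if y \<in> {0..x - dk k} \<union> {x + dk k..2*x} then - (fp y * G a x y) else 0)"
definition gl :: "real \<Rightarrow> real" where "gl y = (if y = x then 0 else - (fp y * G a x y))"

lemma dk_pos: "0 < dk k" unfolding dk_def using x_pos by simp

lemma dk_lt: "dk k < x"
proof -
  have "x / (real k + 2) < x / 1" using x_pos by (intro divide_strict_left_mono) auto
  then show ?thesis unfolding dk_def by simp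
qed

lemma dk_mono: "dk (Suc k) \<le> dk k"
  unfolding dk_def using x_pos by (intro divide_left_mono) auto

lemma dk_lim: "dk \<longlonglongrightarrow> 0"
  unfolding dk_def using x_pos by real_asymp

lemma fpG_nonpos: assumes "y \<in> {0..2*x}" "y \<noteq> x" shows "fp y * G a x y \<le> 0"
proof -
  have "fp y \<ge> 0" using assms x_le by (intro fp_nonneg) auto
  moreover have "G a x y \<le> 0"
  proof (cases "y < x")
    case True
    then have "G a x y = (psi a x - psi a (x - y)) / (2 * pi)" using assms x_le pi_gt_zero by (intro G_left) auto
    moreover have "psi a x \<le> psi a (x - y)" using True assms x_le pi_gt_zero by (intro psi_anti a_pos) auto
    ultimately show ?thesis by (simp add: divide_nonpos_pos)
  next
    case False
    then have "G a x y = (psi a x - psi a (y - x)) / (2 * pi)" using assms by (intro G_right) auto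
    moreover have "psi a x \<le> psi a (y - x)" using False assms x_le pi_gt_zero by (intro psi_anti a_pos) auto
    ultimately show ?thesis by (simp add: divide_nonpos_pos)
  qed
  ultimately show ?thesis by (simp add: mult_nonneg_nonpos)
qed

lemma trunc_has_integral: assumes d: "0 < d" "d < x"
  shows "((\<lambda>y. if y \<in> {0..x - d} \<union> {x + d..2*x} then - (fp y * G a x y) else 0) has_integral
    - (Bd d + integral {d..x} (\<lambda>s. F s * Q a s))) {0..2*x}"
proof -
  have n: "negligible ({0..x - d} \<inter> {x + d..2*x})"
  proof -
    have "{0..x - d} \<inter> {x + d..2*x} = {}" using d by auto
    then show ?thesis by simp
  qed
  define L where "L = (f (x - d) - f x) * ((psi a x - psi a d) / (2 * pi)) + integral {d..x} (\<lambda>s. (f (x - s) - f x) * Q a s)"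
  define R where "R = - (f (x + d) - f x) * ((psi a x - psi a d) / (2 * pi)) - integral {d..x} (\<lambda>s. (f (x + s) - f x) * Q a s)"
  have u: "((\<lambda>y. fp y * G a x y) has_integral (L + R)) ({0..x - d} \<union> {x + d..2*x})"
    unfolding L_def R_def
    by (rule has_integral_Un[OF left_part[OF d] right_part[OF d] n])
  have i1: "(\<lambda>s. (f (x - s) - f x) * Q a s) integrable_on {d..x}"
    using d by (intro integrable_continuous_interval continuous_intros f_cont Q_cont2 continuous_on_compose2[OF f_cont[of UNIV]]) auto
  have i2: "(\<lambda>s. (f (x + s) - f x) * Q a s) integrable_on {d..x}"
    using d by (intro integrable_continuous_interval continuous_intros f_cont Q_cont2 continuous_on_compose2[OF f_cont[of UNIV]]) auto
  have "integral {d..x} (\<lambda>s. (f (x - s) - f x) * Q a s) - integral {d..x} (\<lambda>s. (f (x + s) - f x) * Q a s)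
      = integral {d..x} (\<lambda>s. (f (x - s) - f x) * Q a s - (f (x + s) - f x) * Q a s)"
    by (rule integral_diff[OF i1 i2, symmetric])
  also have "\<dots> = integral {d..x} (\<lambda>s. F s * Q a s)"
    unfolding F_def by (simp add: algebra_simps)
  finally have e: "integral {d..x} (\<lambda>s. (f (x - s) - f x) * Q a s) - integral {d..x} (\<lambda>s. (f (x + s) - f x) * Q a s)
      = integral {d..x} (\<lambda>s. F s * Q a s)" .
  define P where "P = (psi a x - psi a d) / (2 * pi)"
  define I1 where "I1 = integral {d..x} (\<lambda>s. (f (x - s) - f x) * Q a s)"
  define I2 where "I2 = integral {d..x} (\<lambda>s. (f (x + s) - f x) * Q a s)"
  have "L + R = (f (x - d) - f (x + d)) * P + (I1 - I2)"
    unfolding L_def R_def P_def[symmetric] I1_def[symmetric] I2_def[symmetric] by (simp add: algebra_simps)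
  also have "I1 - I2 = integral {d..x} (\<lambda>s. F s * Q a s)" using e unfolding I1_def I2_def .
  finally have v: "L + R = Bd d + integral {d..x} (\<lambda>s. F s * Q a s)"
    unfolding Bd_def P_def .
  have "((\<lambda>y. - (fp y * G a x y)) has_integral - (Bd d + integral {d..x} (\<lambda>s. F s * Q a s)))
     ({0..x - d} \<union> {x + d..2*x})"
    using has_integral_neg[OF u] unfolding v .
  moreover have "({0..x - d} \<union> {x + d..2*x}) \<inter> {0..2*x} = {0..x - d} \<union> {x + d..2*x}" using d by auto
  ultimately show ?thesis
    using has_integral_restrict_Int[of "{0..x - d} \<union> {x + d..2*x}" "\<lambda>y. - (fp y * G a x y)" _ "{0..2*x}"]
    by simp
qed

lemma FQ_small: assumes "0 < d" "d \<le> x" shows "\<bar>integral {0..d} (\<lambda>s. F s * Q a s)\<bar> \<le> (2 * M1 / pi) * d"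
proof -
  have i: "((\<lambda>s. F s * Q a s) has_integral integral {0..d} (\<lambda>s. F s * Q a s)) (cbox 0 d)"
    using integrable_on_subinterval[OF FQ_int, of 0 d] assms by (simp add: integrable_integral)
  have b: "norm (F s * Q a s) \<le> 2 * M1 / pi" if "s \<in> cbox 0 d" for s
  proof (cases "s = 0")
    case True then show ?thesis using M1 by (simp add: F_def)
  next
    case False then show ?thesis using that assms FQ_bound by auto
  qed
  show ?thesis using has_integral_bound[OF _ i b] M1 assms by simp
qed

lemma Bd_bound: assumes "0 < d" "d < x"
  shows "\<bar>Bd d\<bar> \<le> (M1 / pi) * (d * (\<bar>psi a x\<bar> + a\<^sup>2 / pi\<^sup>2) + d * phi a d)"
proof -
  have f1: "\<bar>f (x - d) - f (x + d)\<bar> \<le> M1 * (2 * d)" using f_lip[of "x - d" "x + d"] assms by simp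
  have p2: "phi a (2 * pi - d) \<le> a\<^sup>2 / pi\<^sup>2"
  proof -
    have "phi a (2 * pi - d) \<le> a\<^sup>2 / (2 * pi - d)\<^sup>2" by (rule phi_le)
    also have "\<dots> \<le> a\<^sup>2 / pi\<^sup>2"
      using assms x_le pi_gt_zero by (intro divide_left_mono power_mono mult_pos_pos) auto
    finally show ?thesis .
  qed
  have p: "\<bar>psi a x - psi a d\<bar> \<le> \<bar>psi a x\<bar> + a\<^sup>2 / pi\<^sup>2 + phi a d"
    using p2 phi_nonneg[of a d] phi_nonneg[of a "2*pi - d"] unfolding psi_def[of a d] by linarith
  have "\<bar>Bd d\<bar> = \<bar>f (x - d) - f (x + d)\<bar> * \<bar>psi a x - psi a d\<bar> / (2 * pi)"
    unfolding Bd_def by (simp add: abs_mult)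
  also have "\<dots> \<le> (M1 * (2 * d)) * (\<bar>psi a x\<bar> + a\<^sup>2 / pi\<^sup>2 + phi a d) / (2 * pi)"
    using f1 p M1(2) assms by (intro divide_right_mono mult_mono) auto
  also have "\<dots> = (M1 / pi) * (d * (\<bar>psi a x\<bar> + a\<^sup>2 / pi\<^sup>2) + d * phi a d)"
    by (simp add: field_simps)
  finally show ?thesis .
qed

lemma trunc_lim: "(\<lambda>k. - (Bd (dk k) + integral {dk k..x} (\<lambda>s. F s * Q a s))) \<longlonglongrightarrow> - (0 + integral {0..x} (\<lambda>s. F s * Q a s))"
proof (intro tendsto_minus tendsto_add)
  have "(\<lambda>k. (M1 / pi) * (dk k * (\<bar>psi a x\<bar> + a\<^sup>2 / pi\<^sup>2) + dk k * phi a (dk k))) \<longlonglongrightarrow> (M1 / pi) * (0 * (\<bar>psi a x\<bar> + a\<^sup>2 / pi\<^sup>2) + 0)"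
  proof (intro tendsto_intros dk_lim)
    show "(\<lambda>k. dk k * phi a (dk k)) \<longlonglongrightarrow> 0"
      unfolding dk_def phi_def using x_pos a_pos by real_asymp
  qed
  then have "(\<lambda>k. (M1 / pi) * (dk k * (\<bar>psi a x\<bar> + a\<^sup>2 / pi\<^sup>2) + dk k * phi a (dk k))) \<longlonglongrightarrow> 0" by simp
  then show "(\<lambda>k. Bd (dk k)) \<longlonglongrightarrow> 0"
    by (rule Lim_null_comparison[rotated]) (use Bd_bound dk_pos dk_lt in auto)
  have e: "integral {dk k..x} (\<lambda>s. F s * Q a s) = integral {0..x} (\<lambda>s. F s * Q a s) - integral {0..dk k} (\<lambda>s. F s * Q a s)" for k
    using Henstock_Kurzweil_Integration.integral_combine[OF _ _ FQ_int, of "dk k"] dk_pos[of k] dk_lt[of k] by simp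
  have "(\<lambda>k. integral {0..dk k} (\<lambda>s. F s * Q a s)) \<longlonglongrightarrow> 0"
  proof (rule Lim_null_comparison[rotated])
    show "(\<lambda>k. (2 * M1 / pi) * dk k) \<longlonglongrightarrow> 0"
      using tendsto_mult[OF tendsto_const dk_lim, of "2 * M1 / pi"] by simp
    have "norm (integral {0..dk k} (\<lambda>s. F s * Q a s)) \<le> 2 * M1 / pi * dk k" for k
      using FQ_small[OF dk_pos less_imp_le[OF dk_lt]] by simp
    then show "\<forall>\<^sub>F k in sequentially. norm (integral {0..dk k} (\<lambda>s. F s * Q a s)) \<le> 2 * M1 / pi * dk k"
      by (intro always_eventually) simp
  qed
  then have "(\<lambda>k. integral {0..x} (\<lambda>s. F s * Q a s) - integral {0..dk k} (\<lambda>s. F s * Q a s)) \<longlonglongrightarrow> integral {0..x} (\<lambda>s. F s * Q a s) - 0"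
    by (intro tendsto_diff tendsto_const)
  then show "(\<lambda>k. integral {dk k..x} (\<lambda>s. F s * Q a s)) \<longlonglongrightarrow> integral {0..x} (\<lambda>s. F s * Q a s)"
    unfolding e by simp
qed

lemma rhs_eq: "integral {0..2*x} (\<lambda>y. fp y * G a x y) = integral {0..x} (\<lambda>s. F s * Q a s)"
proof -
  have hk: "(fk k has_integral - (Bd (dk k) + integral {dk k..x} (\<lambda>s. F s * Q a s))) {0..2*x}" for k
    unfolding fk_def by (rule trunc_has_integral[OF dk_pos dk_lt])
  have ik: "integral {0..2*x} (fk k) = - (Bd (dk k) + integral {dk k..x} (\<lambda>s. F s * Q a s))" for k
    using hk by (rule integral_unique)
  have mct: "gl integrable_on {0..2*x} \<and> (\<lambda>k. integral {0..2*x} (fk k)) \<longlonglongrightarrow> integral {0..2*x} gl"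
  proof (rule monotone_convergence_increasing)
    show "fk k integrable_on {0..2*x}" for k using hk by blast
    show "fk k y \<le> fk (Suc k) y" if "y \<in> {0..2*x}" for k y
    proof -
      have sub: "{0..x - dk k} \<union> {x + dk k..2*x} \<subseteq> {0..x - dk (Suc k)} \<union> {x + dk (Suc k)..2*x}"
        using dk_mono[of k] by auto
      show ?thesis
      proof (cases "y \<in> {0..x - dk k} \<union> {x + dk k..2*x}")
        case True then show ?thesis using sub unfolding fk_def by auto
      next
        case False
        show ?thesis
        proof (cases "y \<in> {0..x - dk (Suc k)} \<union> {x + dk (Suc k)..2*x}")
          case True
          then have "y \<noteq> x" using dk_pos[of "Suc k"] by auto
          then have "fp y * G a x y \<le> 0" using fpG_nonpos that by auto
          then show ?thesis using False True unfolding fk_def by auto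
        qed (use False in \<open>auto simp: fk_def\<close>)
      qed
    qed
    show "(\<lambda>k. fk k y) \<longlonglongrightarrow> gl y" if "y \<in> {0..2*x}" for y
    proof (cases "y = x")
      case True
      then have "fk k y = gl y" for k using dk_pos[of k] unfolding fk_def gl_def by auto
      then show ?thesis by simp
    next
      case False
      then have "\<bar>y - x\<bar> > 0" by simp
      then have "eventually (\<lambda>k. dk k < \<bar>y - x\<bar>) sequentially"
        by (rule order_tendstoD(2)[OF dk_lim])
      then have "eventually (\<lambda>k. fk k y = gl y) sequentially"
        by (rule eventually_mono) (use that False in \<open>auto simp: fk_def gl_def abs_if split: if_splits\<close>)
      then show ?thesis by (rule tendsto_eventually)
    qed
    have "(\<lambda>k. integral {0..2*x} (fk k)) \<longlonglongrightarrow> - (0 + integral {0..x} (\<lambda>s. F s * Q a s))"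
      unfolding ik by (rule trunc_lim)
    then show "bounded (range (\<lambda>k. integral {0..2*x} (fk k)))" by (rule convergent_imp_bounded)
  qed
  have "(\<lambda>k. integral {0..2*x} (fk k)) \<longlonglongrightarrow> - (0 + integral {0..x} (\<lambda>s. F s * Q a s))"
    unfolding ik by (rule trunc_lim)
  with mct have gle: "integral {0..2*x} gl = - integral {0..x} (\<lambda>s. F s * Q a s)"
    using LIMSEQ_unique by fastforce
  have "integral {0..2*x} (\<lambda>y. fp y * G a x y) = integral {0..2*x} (\<lambda>y. - gl y)"
    by (rule integral_spike[of "{x}"]) (auto simp: gl_def)
  also have "\<dots> = integral {0..x} (\<lambda>s. F s * Q a s)" using gle by simp
  finally show ?thesis .
qed

end

theorem lemma4p5:
  fixes a :: real and f :: "real \<Rightarrow> real" and x :: real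
  assumes "a > 0"
    and "smooth_periodic f"
    and "\<forall>t. f (- t) = f t"
    and "\<forall>t. f t \<ge> 0"
    and "f 0 = 0"
    and "\<forall>t\<in>{0..<pi}. deriv f t \<ge> 0"
    and "0 < x" and "x \<le> pi / 2"
  shows "H a f x \<le> integral {0..2 * x} (\<lambda>y. deriv f y * G a x y)"
proof -
  interpret setting a f x
    using assms by unfold_locales auto
  show ?thesis using H_eq main_ineq rhs_eq by simp
qed


end
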